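(* For all $n\ge1$, \[a_n(132,\emptyset,\{3\})=a_n(132,\emptyset,\{1,3\})=\sum_{k=1}^{n}(k-1)!\,(n-k)!.\]
   Context: For $n\ge1$, $\mathcal S_n$ is the set of permutations $\pi=\pi_1\cdots\pi_n$ of $[n]$. A bi-vincular pattern of length $k$ is a triple $p=(\sigma,X,Y)$ with $\sigma\in\mathcal S_k$ and $X,Y\subseteq\{0,1,\dots,k\}$. A permutation $\pi\in\mathcal S_n$ contains $p$ if there are indices $1\le i_1<\dots<i_k\le n$ such that $(\pi_{i_1},\dots,\pi_{i_k})$ is order-isomorphic to $\sigma$ and, letting $j_1<\dots<j_k$ be the values $\pi_{i_1},\dots,\pi_{i_k}$ sorted increasingly and setting $i_0=j_0=0$, $i_{k+1}=j_{k+1}=n+1$, one has $i_{x+1}=i_x+1$ for all $x\in X$ and $j_{y+1}=j_y+1$ for all $y\in Y$. Otherwise $\pi$ avoids $p$; $a_n(p)$ is the number of $\pi\in\mathcal S_n$ avoiding $p$. *)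

theory Defs
  imports "HOL-Combinatorics.Multiset_Permutations"
begin

text \<open>Permutations of [n] are lists (one-line notation, 1-based values);
  positions in the paper are 1-based, so entry pi_i is pi ! (i - 1).\<close>

definition contains_bv :: "nat list \<Rightarrow> nat list \<times> nat set \<times> nat set \<Rightarrow> bool" where
  "contains_bv \<pi> p = (case p of (\<sigma>, X, Y) \<Rightarrow>
     (let n = length \<pi>; k = length \<sigma> in
      \<exists>I :: nat \<Rightarrow> nat.
        (\<forall>a\<in>{1..k}. 1 \<le> I a \<and> I a \<le> n) \<and>
        (\<forall>a b. 1 \<le> a \<longrightarrow> a < b \<longrightarrow> b \<le> k \<longrightarrow> I a < I b) \<and>
        (\<forall>a\<in>{1..k}. \<forall>b\<in>{1..k}.
            (\<pi> ! (I a - 1) < \<pi> ! (I b - 1)) \<longleftrightarrow> (\<sigma> ! (a - 1) < \<sigma> ! (b - 1))) \<and>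
        (let ii = (\<lambda>x. if x = 0 then 0 else if x = k + 1 then n + 1 else I x);
             vals = sort (map (\<lambda>a. \<pi> ! (I a - 1)) [1..<k+1]);
             jj = (\<lambda>y. if y = 0 then 0 else if y = k + 1 then n + 1 else vals ! (y - 1))
         in (\<forall>x\<in>X. x \<le> k \<longrightarrow> ii (x + 1) = ii x + 1) \<and>
            (\<forall>y\<in>Y. y \<le> k \<longrightarrow> jj (y + 1) = jj y + 1))))"

definition avoid_count :: "nat \<Rightarrow> nat list \<times> nat set \<times> nat set \<Rightarrow> nat" where
  "avoid_count n p = card {\<pi> \<in> permutations_of_set {1..n}. \<not> contains_bv \<pi> p}"

end

theory Submission imports Defs begin
lemma extr:
  assumes "contains_bv \<pi> (\<sigma>,X,Y)" "length \<sigma> = 3" 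
  shows "\<exists>I. (\<forall>a\<in>{1..3}. 1 \<le> I a \<and> I a \<le> length \<pi>) \<and>
    (\<forall>a b. 1 \<le> a \<longrightarrow> a < b \<longrightarrow> b \<le> 3 \<longrightarrow> I a < I b) \<and>
    (\<forall>a\<in>{1..3}. \<forall>b\<in>{1..3}. (\<pi> ! (I a - 1) < \<pi> ! (I b - 1)) \<longleftrightarrow> (\<sigma> ! (a - 1) < \<sigma> ! (b - 1))) \<and>
    (3 \<in> Y \<longrightarrow> sort (map (\<lambda>a. \<pi> ! (I a - 1)) [1,2,3]) ! 2 = length \<pi>)"
  using assms unfolding contains_bv_def Let_def prod.case assms(2)
  apply (elim exE conjE)
  apply (rule_tac x=I in exI)
  apply (intro conjI impI)
     apply (simp_all del: sort_key_simps add: upt_rec)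
  apply (drule_tac x=3 in bspec, assumption)
  apply (simp del: sort_key_simps add: upt_rec numeral_2_eq_2 numeral_3_eq_3)
  done

definition good :: "nat list \<Rightarrow> bool" where
  "good \<pi> = (\<exists>i j l. i < j \<and> j < l \<and> l < length \<pi> \<and> \<pi> ! j = length \<pi> \<and> \<pi> ! i < \<pi> ! l)"

lemma ball3: "(\<forall>a\<in>{1..3::nat}. P a) \<longleftrightarrow> P 1 \<and> P 2 \<and> P 3"
proof -
  have "{1..3::nat} = {1,2,3}" by auto
  then show ?thesis by simp
qed

lemma all3: "(\<forall>a b. 1 \<le> a \<longrightarrow> a < b \<longrightarrow> b \<le> (3::nat) \<longrightarrow> P a b) \<longleftrightarrow> P 1 2 \<and> P 1 3 \<and> P 2 3"
proof
  assume "P 1 2 \<and> P 1 3 \<and> P 2 3"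
  then show "\<forall>a b. 1 \<le> a \<longrightarrow> a < b \<longrightarrow> b \<le> (3::nat) \<longrightarrow> P a b"
  proof (intro allI impI)
    fix a b :: nat assume "1 \<le> a" "a < b" "b \<le> 3"
    then have "(a = 1 \<and> b = 2) \<or> (a = 1 \<and> b = 3) \<or> (a = 2 \<and> b = 3)" by arith
    then show "P a b" using \<open>P 1 2 \<and> P 1 3 \<and> P 2 3\<close> by auto
  qed
qed auto

lemma L1:
  assumes "contains_bv \<pi> ([1,3,2],{},Y)" "3 \<in> Y"
  shows "good \<pi>"
proof -
  obtain I where h1: "\<forall>a\<in>{1..3}. 1 \<le> I a \<and> I a \<le> length \<pi>"
    and h2: "\<forall>a b. 1 \<le> a \<longrightarrow> a < b \<longrightarrow> b \<le> 3 \<longrightarrow> I a < I b"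
    and h3: "\<forall>a\<in>{1..3}. \<forall>b\<in>{1..3}. (\<pi> ! (I a - 1) < \<pi> ! (I b - 1)) \<longleftrightarrow> ([1,3,2::nat] ! (a - 1) < [1,3,2] ! (b - 1))"
    and h4: "sort (map (\<lambda>a. \<pi> ! (I a - 1)) [1,2,3]) ! 2 = length \<pi>"
    using extr[OF assms(1)] assms(2) by auto
  from h1 have i1: "1 \<le> I 1" "I 3 \<le> length \<pi>" by (auto simp: ball3)
  from h2 have i2: "I 1 < I 2" "I 2 < I 3" by (auto simp: all3)
  from h3 have o: "\<pi> ! (I 1 - 1) < \<pi> ! (I 3 - 1)" "\<pi> ! (I 3 - 1) < \<pi> ! (I 2 - 1)"
    by (auto simp: ball3)
  from h4 o have v: "\<pi> ! (I 2 - 1) = length \<pi>" by simp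
  show ?thesis unfolding good_def
    apply (rule exI[of _ "I 1 - 1"], rule exI[of _ "I 2 - 1"], rule exI[of _ "I 3 - 1"])
  proof (intro conjI)
    show "I 1 - 1 < I 2 - 1" using i1 i2 by linarith
    show "I 2 - 1 < I 3 - 1" using i1 i2 by linarith
    show "I 3 - 1 < length \<pi>" using i1 i2 by linarith
    show "\<pi> ! (I 2 - 1) = length \<pi>" by (rule v)
    show "\<pi> ! (I 1 - 1) < \<pi> ! (I 3 - 1)" by (rule o(1))
  qed
qed

lemma build:
  assumes "i < j" "j < l" "l < length \<pi>" "\<pi> ! j = length \<pi>" "\<pi> ! l = \<pi> ! i + 1"
    "Y \<subseteq> {1,3}" "set \<pi> = {1..length \<pi>}" "distinct \<pi>"
  shows "contains_bv \<pi> ([1,3,2],{},Y)"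
proof -
  define I where "I = (\<lambda>a::nat. if a = 1 then i+1 else if a = 2 then j+1 else l+1)"
  have lt: "\<pi> ! l < length \<pi>"
  proof -
    have "\<pi> ! l \<in> set \<pi>" using assms(3) by simp
    then have "\<pi> ! l \<le> length \<pi>" unfolding assms(7) by simp
    moreover have "\<pi> ! l \<noteq> length \<pi>"
    proof
      assume "\<pi> ! l = length \<pi>"
      then have "\<pi> ! l = \<pi> ! j" using assms(4) by simp
      then have "l = j" using assms(1-3,8) nth_eq_iff_index_eq[of \<pi> l j] by simp
      then show False using assms(1-2) by simp
    qed
    ultimately show ?thesis by simp
  qed
  have s: "sort (map (\<lambda>a. \<pi> ! (I a - 1)) [1..<3+1]) = [\<pi>!i, \<pi>!i+1, length \<pi>]"
  proof -
    have "map (\<lambda>a. \<pi> ! (I a - 1)) [1..<3+1] = [\<pi>!i, \<pi>!j, \<pi>!l]"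
      by (simp add: I_def upt_rec)
    then show ?thesis using assms(4,5) lt by simp
  qed
  have len: "length [1,3,2::nat] = 3" by simp
  have o1: "\<pi>!i < \<pi>!l" "\<pi>!l < \<pi>!j" using assms(4,5) lt by simp_all
  show ?thesis
    unfolding contains_bv_def Let_def prod.case len s
  apply (rule exI[of _ I], intro conjI)
  subgoal using assms(1-3) by (simp add: ball3 I_def)
  subgoal using assms(1-3) by (simp add: all3 I_def)
  subgoal using o1 by (simp add: ball3 I_def)
  subgoal by simp
  subgoal unfolding s using assms(6) by auto
  done
qed


lemma walk:
  assumes "set \<pi> = {1..length \<pi>}" "distinct \<pi>" "\<pi>!j = length \<pi>" "j < l" "l < length \<pi>"
  shows "i < j \<Longrightarrow> \<pi>!i < \<pi>!l \<Longrightarrow> \<exists>i' l'. i' < j \<and> j < l' \<and> l' < length \<pi> \<and> \<pi>!l' = \<pi>!i' + 1"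
proof (induction "\<pi>!l - \<pi>!i" arbitrary: i rule: less_induct)
  case less
  have jl: "j < length \<pi>" using assms(4,5) by simp
  have ln: "\<pi>!l \<noteq> length \<pi>"
  proof
    assume "\<pi> ! l = length \<pi>"
    then have "\<pi> ! l = \<pi> ! j" using assms(3) by simp
    then have "l = j" using assms(2,5) jl nth_eq_iff_index_eq[of \<pi> l j] by simp
    then show False using assms(4) by simp
  qed
  have "\<pi>!l \<in> set \<pi>" using assms(5) by simp
  then have "\<pi>!l \<le> length \<pi>" unfolding assms(1) by simp
  with ln have vl: "\<pi>!i + 1 < length \<pi>" using less.prems(2) by simp
  then have "\<pi>!i + 1 \<in> set \<pi>" unfolding assms(1) by simp
  then obtain q where q: "q < length \<pi>" "\<pi>!q = \<pi>!i + 1" by (auto simp: in_set_conv_nth)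
  have qj: "q \<noteq> j" using q(2) vl assms(3) by auto
  show ?case
  proof (cases "j < q")
    case True
    then show ?thesis using less.prems(1) q by blast
  next
    case False
    with qj have qj': "q < j" by simp
    have "q \<noteq> l" using qj' assms(4) by simp
    then have "\<pi>!q \<noteq> \<pi>!l" using assms(2,5) q(1) nth_eq_iff_index_eq[of \<pi> q l] by simp
    then have "\<pi>!q < \<pi>!l" using q(2) less.prems(2) by simp
    moreover have "\<pi>!l - \<pi>!q < \<pi>!l - \<pi>!i" using q(2) less.prems(2) \<open>\<pi>!q < \<pi>!l\<close> by simp
    ultimately show ?thesis using less.hyps[of q] qj' by blast
  qed
qed

lemma perm_props:
  assumes "\<pi> \<in> permutations_of_set {1..n}"
  shows "length \<pi> = n" "set \<pi> = {1..length \<pi>}" "distinct \<pi>"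
proof -
  have a: "set \<pi> = {1..n}" "distinct \<pi>" using permutations_of_setD[OF assms] by auto
  then have "length \<pi> = card (set \<pi>)" using distinct_card by metis
  then show "length \<pi> = n" using a by simp
  then show "set \<pi> = {1..length \<pi>}" using a by simp
  show "distinct \<pi>" using a by simp
qed

lemma contains_iff:
  assumes "\<pi> \<in> permutations_of_set {1..n}" "Y = {3} \<or> Y = {1,3}"
  shows "contains_bv \<pi> ([1,3,2],{},Y) \<longleftrightarrow> good \<pi>"
proof
  assume "contains_bv \<pi> ([1,3,2],{},Y)"
  then show "good \<pi>" using L1 assms(2) by auto
next
  assume "good \<pi>"
  then obtain i j l where g: "i < j" "j < l" "l < length \<pi>" "\<pi> ! j = length \<pi>" "\<pi> ! i < \<pi> ! l"
    unfolding good_def by blast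
  note pp = perm_props[OF assms(1)]
  obtain i' l' where w: "i' < j" "j < l'" "l' < length \<pi>" "\<pi>!l' = \<pi>!i' + 1"
    using walk[OF pp(2,3) g(4,2,3) g(1,5)] by blast
  show "contains_bv \<pi> ([1,3,2],{},Y)"
    by (rule build[OF w(1-3) g(4) w(4) _ pp(2,3)]) (use assms(2) in auto)
qed


lemma memF:
  assumes k: "1 \<le> k" "k \<le> n" and xs: "xs \<in> permutations_of_set {n-k+1..n-1}"
    and ys: "ys \<in> permutations_of_set {1..n-k}"
  shows "xs @ n # ys \<in> permutations_of_set {1..n}" "length xs = k - 1" "\<not> good (xs @ n # ys)"
proof -
  have sx: "set xs = {n-k+1..n-1}" "distinct xs" using permutations_of_setD[OF xs] by auto
  have sy: "set ys = {1..n-k}" "distinct ys" using permutations_of_setD[OF ys] by auto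
  have "set (xs @ n # ys) = {1..n}" using sx sy k by auto
  moreover have "distinct (xs @ n # ys)" using sx sy k by auto
  ultimately show P: "xs @ n # ys \<in> permutations_of_set {1..n}" by (rule permutations_of_setI)
  have "length xs = card (set xs)" using sx distinct_card by metis
  then show lx: "length xs = k - 1" using sx k by simp
  show "\<not> good (xs @ n # ys)"
  proof
    assume "good (xs @ n # ys)"
    then obtain i j l where g: "i < j" "j < l" "l < length (xs @ n # ys)"
      "(xs @ n # ys) ! j = length (xs @ n # ys)" "(xs @ n # ys) ! i < (xs @ n # ys) ! l"
      unfolding good_def by blast
    note pp = perm_props[OF P]
    have "(xs @ n # ys) ! length xs = n" by simp
    then have "(xs @ n # ys) ! j = (xs @ n # ys) ! length xs" using g(4) pp(1) by simp
    moreover have "j < length (xs @ n # ys)" "length xs < length (xs @ n # ys)" using g(2,3) by simp_all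
    ultimately have j: "j = length xs" using nth_eq_iff_index_eq[OF pp(3), of j "length xs"] by simp
    have "(xs @ n # ys) ! i = xs ! i" using g(1) j by (simp add: nth_append)
    moreover have "xs ! i \<in> set xs" using g(1) j by simp
    moreover have "(xs @ n # ys) ! l = ys ! (l - length xs - 1)" using g(2) j
      by (simp add: nth_append nth_Cons')
    moreover have "ys ! (l - length xs - 1) \<in> set ys" using g(2,3) j by auto
    ultimately show False using g(5) sx(1) sy(1) by auto
  qed
qed

lemma decomp:
  assumes P: "\<pi> \<in> permutations_of_set {1..n}" and ng: "\<not> good \<pi>" and n: "n \<ge> 1"
  shows "\<exists>k\<in>{1..n}. \<exists>xs ys. \<pi> = xs @ n # ys \<and> xs \<in> permutations_of_set {n-k+1..n-1}
     \<and> ys \<in> permutations_of_set {1..n-k}"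
proof -
  note pp = perm_props[OF P]
  have "n \<in> set \<pi>" using pp n by simp
  then obtain xs ys where pi: "\<pi> = xs @ n # ys" by (meson split_list)
  have d: "distinct xs" "distinct ys" "n \<notin> set xs" "n \<notin> set ys" "set xs \<inter> set ys = {}"
  proof -
    have "distinct (xs @ n # ys)" using pp(3) pi by simp
    then show "distinct xs" "distinct ys" "n \<notin> set xs" "n \<notin> set ys" "set xs \<inter> set ys = {}"
      by auto
  qed
  have un: "set xs \<union> set ys = {1..n-1}"
  proof -
    have "set \<pi> = {1..n}" using pp(1,2) by simp
    then have "set xs \<union> set ys \<union> {n} = {1..n}" unfolding pi by auto
    then have "set xs \<union> set ys = {1..n} - {n}" using d(3,4) by blast
    moreover have "{1..n} - {n} = {1..n-1}" using n by auto
    ultimately show ?thesis by simp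
  qed
  have lt: "y < x" if xin: "x \<in> set xs" and yin: "y \<in> set ys" for x y
  proof -
    obtain i where i: "i < length xs" "xs ! i = x" using xin by (metis in_set_conv_nth)
    obtain t where t: "t < length ys" "ys ! t = y" using yin by (metis in_set_conv_nth)
    have "\<pi> ! i = x" using i pi by (simp add: nth_append)
    moreover have "\<pi> ! (length xs + 1 + t) = y" using t pi by (simp add: nth_append)
    moreover have "\<pi> ! length xs = length \<pi>" using pi pp(1) by simp
    moreover have "length xs + 1 + t < length \<pi>" using pi t by simp
    ultimately have "\<not> x < y" using ng i(1) unfolding good_def
      apply -
      apply (rule notI)
      apply (erule notE)
      apply (rule exI[of _ i], rule exI[of _ "length xs"], rule exI[of _ "length xs + 1 + t"])
      apply simp
      done
    moreover have "x \<noteq> y" using d(5) xin yin by auto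
    ultimately show ?thesis by simp
  qed
  define m where "m = length ys"
  have cy: "card (set ys) = m" using d(2) m_def distinct_card by metis
  have "set ys \<subseteq> {1..n-1}" using un by auto
  then have mle: "m \<le> n - 1" using cy card_mono[of "{1..n-1}" "set ys"] by simp
  have sub: "{1..m} \<subseteq> set ys"
  proof
    fix v assume v: "v \<in> {1..m}"
    show "v \<in> set ys"
    proof (rule ccontr)
      assume "v \<notin> set ys"
      moreover have "v \<in> {1..n-1}" using v mle by simp
      then have "v \<in> set xs \<union> set ys" using un by simp
      ultimately have "v \<in> set xs" by blast
      then have "set ys \<subseteq> {1..<v}" using lt un by fastforce
      then have "m \<le> v - 1" using cy card_mono[of "{1..<v}" "set ys"] by simp
      then show False using v by auto
    qed
  qed
  have sy: "set ys = {1..m}"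
    using card_subset_eq[OF _ sub] cy by simp
  have "set xs = {1..n-1} - {1..m}" using un sy d(5) by blast
  moreover have "{1..n-1} - {1..m} = {m+1..n-1}" by auto
  ultimately have sx: "set xs = {m+1..n-1}" by simp
  have lpi: "length xs + 1 + m = n" using pp(1) pi m_def by simp
  define k where "k = length xs + 1"
  have k: "k \<in> {1..n}" using lpi k_def by simp
  have "n - k + 1 = m + 1" "n - k = m" using lpi k_def by simp_all
  then have "xs \<in> permutations_of_set {n-k+1..n-1}" "ys \<in> permutations_of_set {1..n-k}"
    using sx sy d by (auto intro: permutations_of_setI)
  then show ?thesis using k pi by blast
qed


definition F :: "nat \<Rightarrow> nat \<Rightarrow> nat list set" where
  "F n k = (\<lambda>(xs,ys). xs @ n # ys) ` (permutations_of_set {n-k+1..n-1} \<times> permutations_of_set {1..n-k})"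

lemma inF: "\<pi> \<in> F n k \<longleftrightarrow> (\<exists>xs ys. \<pi> = xs @ n # ys \<and> xs \<in> permutations_of_set {n-k+1..n-1} \<and> ys \<in> permutations_of_set {1..n-k})"
  unfolding F_def by force

lemma set_eq:
  assumes n: "n \<ge> 1"
  shows "{\<pi> \<in> permutations_of_set {1..n}. \<not> good \<pi>} = (\<Union>k\<in>{1..n}. F n k)"
proof
  show "{\<pi> \<in> permutations_of_set {1..n}. \<not> good \<pi>} \<subseteq> (\<Union>k\<in>{1..n}. F n k)"
  proof
    fix \<pi> assume "\<pi> \<in> {\<pi> \<in> permutations_of_set {1..n}. \<not> good \<pi>}"
    then have "\<pi> \<in> permutations_of_set {1..n}" "\<not> good \<pi>" by simp_all
    from decomp[OF this n] obtain k xs ys where k: "k \<in> {1..n}" and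
      d: "\<pi> = xs @ n # ys" "xs \<in> permutations_of_set {n-k+1..n-1}" "ys \<in> permutations_of_set {1..n-k}"
      by blast
    have "\<pi> \<in> F n k" unfolding inF using d by blast
    then show "\<pi> \<in> (\<Union>k\<in>{1..n}. F n k)" using k by blast
  qed
next
  show "(\<Union>k\<in>{1..n}. F n k) \<subseteq> {\<pi> \<in> permutations_of_set {1..n}. \<not> good \<pi>}"
  proof
    fix \<pi> assume "\<pi> \<in> (\<Union>k\<in>{1..n}. F n k)"
    then obtain k where k: "k \<in> {1..n}" and "\<pi> \<in> F n k" by blast
    then obtain xs ys where
      d: "\<pi> = xs @ n # ys" "xs \<in> permutations_of_set {n-k+1..n-1}" "ys \<in> permutations_of_set {1..n-k}"
      unfolding inF by blast
    have "1 \<le> k" "k \<le> n" using k by simp_all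
    from memF[OF this d(2,3)] d(1) show "\<pi> \<in> {\<pi> \<in> permutations_of_set {1..n}. \<not> good \<pi>}" by simp
  qed
qed

lemma notin:
  fixes n k :: nat
  assumes "1 \<le> k" "k \<le> n" "xs \<in> permutations_of_set {n-k+1..n-1}" "ys \<in> permutations_of_set {1..n-k}"
  shows "n \<notin> set xs" "n \<notin> set ys"
proof -
  have "n - 1 < n" "n - k < n" using assms(1,2) by linarith+
  then have "n \<notin> {n-k+1..n-1}" "n \<notin> {1..n-k}" by simp_all
  then show "n \<notin> set xs" "n \<notin> set ys"
    using permutations_of_setD(1)[OF assms(3)] permutations_of_setD(1)[OF assms(4)] by simp_all
qed

lemma cardF:
  assumes "k \<in> {1..n}"
  shows "card (F n k) = fact (k-1) * fact (n-k)"
proof -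
  have k: "1 \<le> k" "k \<le> n" using assms by simp_all
  have inj: "inj_on (\<lambda>(xs,ys). xs @ n # ys) (permutations_of_set {n-k+1..n-1} \<times> permutations_of_set {1..n-k})"
  proof (rule inj_onI, clarify)
    fix a b c d
    assume h: "a \<in> permutations_of_set {n-k+1..n-1}" "b \<in> permutations_of_set {1..n-k}"
      "c \<in> permutations_of_set {n-k+1..n-1}" "d \<in> permutations_of_set {1..n-k}"
      "a @ n # b = c @ n # d"
    from append_Cons_eq_iff[OF notin[OF k h(1,2)], of c d] h(5)
    show "a = c \<and> b = d" by simp
  qed
  have "card {n-k+1..n-1} = Suc (n-1) - (n-k+1)" by (rule card_atLeastAtMost)
  then have c1: "card {n-k+1..n-1} = k - 1" using k by simp
  have c2: "card {1..n-k} = n - k" by simp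
  show ?thesis unfolding F_def card_image[OF inj] card_cartesian_product
      card_permutations_of_set[OF finite_atLeastAtMost] c1 c2 ..
qed

lemma disjF:
  assumes "k \<in> {1..n}" "k' \<in> {1..n}" "k \<noteq> k'"
  shows "F n k \<inter> F n k' = {}"
proof (rule ccontr)
  assume "F n k \<inter> F n k' \<noteq> {}"
  then obtain \<pi> where "\<pi> \<in> F n k" "\<pi> \<in> F n k'" by blast
  then obtain a b c d where
    h: "a \<in> permutations_of_set {n-k+1..n-1}" "b \<in> permutations_of_set {1..n-k}"
      "c \<in> permutations_of_set {n-k'+1..n-1}" "d \<in> permutations_of_set {1..n-k'}"
      "a @ n # b = c @ n # d"
    unfolding inF by metis
  have k: "1 \<le> k" "k \<le> n" "1 \<le> k'" "k' \<le> n" using assms by simp_all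
  have "a = c" using append_Cons_eq_iff[OF notin[OF k(1,2) h(1,2)], of c d] h(5) by simp
  moreover have "length a = k - 1" using memF(2)[OF k(1,2) h(1,2)] .
  moreover have "length c = k' - 1" using memF(2)[OF k(3,4) h(3,4)] .
  ultimately show False using k assms(3) by simp
qed

lemma count_eq:
  assumes n: "n \<ge> 1" and Y: "Y = {3} \<or> Y = {1,3}"
  shows "avoid_count n ([1,3,2], {}, Y) = (\<Sum>k=1..n. fact (k - 1) * fact (n - k))"
proof -
  have "{\<pi> \<in> permutations_of_set {1..n}. \<not> contains_bv \<pi> ([1,3,2], {}, Y)}
      = {\<pi> \<in> permutations_of_set {1..n}. \<not> good \<pi>}"
    using contains_iff[OF _ Y] by blast
  then have "avoid_count n ([1,3,2], {}, Y) = card (\<Union>k\<in>{1..n}. F n k)"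
    unfolding avoid_count_def set_eq[OF n] by simp
  also have "\<dots> = (\<Sum>k\<in>{1..n}. card (F n k))"
  proof (rule card_UN_disjoint)
    show "\<forall>i\<in>{1..n}. finite (F n i)" unfolding F_def by simp
    show "\<forall>i\<in>{1..n}. \<forall>j\<in>{1..n}. i \<noteq> j \<longrightarrow> F n i \<inter> F n j = {}" using disjF by blast
  qed simp
  also have "\<dots> = (\<Sum>k=1..n. fact (k - 1) * fact (n - k))"
    by (rule sum.cong) (simp_all add: cardF)
  finally show ?thesis .
qed

theorem mainTheorem8:
  fixes n :: nat
  assumes "n \<ge> 1"
  shows "avoid_count n ([1,3,2], {}, {3}) = (\<Sum>k=1..n. fact (k - 1) * fact (n - k))
       \<and> avoid_count n ([1,3,2], {}, {1,3}) = (\<Sum>k=1..n. fact (k - 1) * fact (n - k))"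
  using count_eq[OF assms] by blast

end
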